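(* $$\frac{1}{(q)_\infty^3}\sum_{i,j,k\in\mathbb Z}(-1)^{i+j+k}q^{\binom{i+j+k}{2}+i^2+j^2+k^2}=\frac{(q^4;q^4)_\infty(q^{20};q^{20})_\infty}{(q)_\infty^2}\sum_{a=0}^{1}(-q)^a\,[-q^{2-2a};q^4]_\infty\,[q^{4+2a};q^{20}]_\infty\,[q^{12-4a};q^{40}]_\infty.$$
   Context: $q$ is complex with $0<|q|<1$. $(a;q)_\infty=\prod_{j\ge0}(1-aq^j)$, $(q)_\infty=(q;q)_\infty$, $[z;q]_\infty:=(z;q)_\infty(q/z;q)_\infty$, $\binom{x}{2}=x(x-1)/2$. *)

theory Defs
  imports "HOL-Analysis.Analysis"
begin

definition qpoch_inf :: "complex \<Rightarrow> complex \<Rightarrow> complex" where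
  "qpoch_inf a q = (\<Prod>j. (1 - a * q ^ j))"

definition qpoch :: "complex \<Rightarrow> complex" where
  "qpoch q = qpoch_inf q q"

definition qtheta :: "complex \<Rightarrow> complex \<Rightarrow> complex" where
  "qtheta z q = qpoch_inf z q * qpoch_inf (q / z) q"

definition binom2 :: "int \<Rightarrow> int" where
  "binom2 x = x * (x - 1) div 2"

end

theory Submission
  imports Defs
begin

definition fp :: "complex \<Rightarrow> nat \<Rightarrow> complex" where
  "fp p n = (\<Prod>j<n. (1 - p^(Suc j)))"

definition gb :: "complex \<Rightarrow> nat \<Rightarrow> nat \<Rightarrow> complex" where
  "gb p N k = (if k \<le> N then fp p N / (fp p k * fp p (N - k)) else 0)"

lemma pow_ne_one: "norm p < 1 \<Longrightarrow> n > 0 \<Longrightarrow> p ^ n \<noteq> (1::complex)"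
proof
  assume p: "norm p < 1" and n: "n > 0" and e: "p ^ n = 1"
  hence "norm p ^ n = 1" by (metis norm_one norm_power)
  moreover have "norm p ^ n < 1" using p n by (simp add: power_less_one_iff)
  ultimately show False by simp
qed

lemma one_minus_pow_nz: "norm p < 1 \<Longrightarrow> n > 0 \<Longrightarrow> 1 - p ^ n \<noteq> (0::complex)"
  using pow_ne_one by force

lemma pow_Suc_ne_one: "norm p < 1 \<Longrightarrow> p * p ^ n \<noteq> (1::complex)"
  using pow_ne_one[of p "Suc n"] by simp

lemma fp_nz: "norm p < 1 \<Longrightarrow> fp p n \<noteq> 0"
  unfolding fp_def using pow_Suc_ne_one[of p] by (auto simp: prod_zero_iff)

lemma fp_Suc: "fp p (Suc n) = fp p n * (1 - p^Suc n)"
  by (simp add: fp_def)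

lemma gb_0 [simp]: "gb p N 0 = 1" if "norm p < 1"
  using fp_nz[OF that] by (simp add: gb_def fp_def)

lemma gb_same: "norm p < 1 \<Longrightarrow> gb p N N = 1"
  using fp_nz[of p] by (simp add: gb_def fp_def)

lemma field_aux:
  fixes A B C a b c x :: complex
  assumes "A \<noteq> 0" "B \<noteq> 0" "a \<noteq> 0" "b \<noteq> 0" "c = b + x * a"
  shows "C * c / ((A * a) * (B * b)) = C / ((A * a) * B) + x * (C / (A * (B * b)))"
  using assms by (simp add: field_simps)

lemma tri_Suc: "(k + k * k) div 2 = k * (k - Suc 0) div 2 + (k::nat)"
proof -
  have "k + k*k = k*(k - Suc 0) + 2*k" by (cases k) (auto simp: algebra_simps)
  thus ?thesis by simp
qed

lemma gb_pascal:
  assumes p: "norm p < 1" and k: "k \<le> N"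
  shows "gb p (Suc N) (Suc k) = gb p N (Suc k) + p^(N - k) * gb p N k"
proof (cases "k = N")
  case True
  thus ?thesis using gb_same[OF p] by (simp add: gb_def)
next
  case False
  with k have kN: "Suc k \<le> N" by simp
  have e1: "Suc N - Suc k = Suc (N - Suc k)" using kN by simp
  have e2: "N - k = Suc (N - Suc k)" using kN by simp
  define m where "m = N - Suc k"
  have Nm: "N = m + Suc k" using kN m_def by simp
  have nz: "\<And>n. fp p n \<noteq> 0" using fp_nz[OF p] .
  have a: "1 - p^Suc k \<noteq> 0" "1 - p^Suc m \<noteq> 0" using pow_Suc_ne_one[OF p] by auto
  have key: "1 - p^Suc N = (1 - p^Suc m) + p^Suc m * (1 - p^Suc k)"
    unfolding Nm by (simp add: algebra_simps power_add)
  have e1': "Suc N - Suc k = Suc m" and e2': "N - k = Suc m" and e3: "N - Suc k = m" using kN m_def by auto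
  have "gb p (Suc N) (Suc k) = fp p N * (1 - p^Suc N) / ((fp p k * (1 - p^Suc k)) * (fp p m * (1 - p^Suc m)))"
    unfolding gb_def using kN by (simp only: e1' fp_Suc if_True) auto
  also have "\<dots> = fp p N / ((fp p k * (1 - p^Suc k)) * fp p m)
       + p^Suc m * (fp p N / (fp p k * (fp p m * (1 - p^Suc m))))"
    by (rule field_aux[OF nz[of k] nz[of m] a key])
  also have "\<dots> = gb p N (Suc k) + p^(N - k) * gb p N k"
    unfolding gb_def using kN by (simp only: e2' e3 fp_Suc if_True) auto
  finally show ?thesis .
qed

lemma qbinomial:
  assumes p: "norm p < 1"
  shows "(\<Prod>j<N. (1 + w * p^j)) = (\<Sum>k\<le>N. gb p N k * p^(k*(k-1) div 2) * w^k)"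
proof (induction N)
  case 0
  then show ?case using p by simp
next
  case (Suc N)
  have tri: "Suc k * (Suc k - 1) div 2 = k*(k-1) div 2 + k" for k :: nat
  proof -
    have "Suc k * k = k*(k-1) + 2*k" by (cases k) (auto simp: algebra_simps)
    thus ?thesis by simp
  qed
  have "(\<Prod>j<Suc N. (1 + w * p^j)) = (\<Sum>k\<le>N. gb p N k * p^(k*(k-1) div 2) * w^k) * (1 + w*p^N)"
    using Suc by simp
  also have "\<dots> = (\<Sum>k\<le>N. gb p N k * p^(k*(k-1) div 2) * w^k)
                 + (\<Sum>k\<le>N. gb p N k * p^(k*(k-1) div 2) * p^N * w^(Suc k))"
    by (simp add: algebra_simps sum_distrib_right sum_distrib_left sum.distrib)
  also have "(\<Sum>k\<le>N. gb p N k * p^(k*(k-1) div 2) * w^k) =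
      1 + (\<Sum>k\<le>N. gb p N (Suc k) * p^(Suc k*(Suc k-1) div 2) * w^(Suc k))"
  proof -
    have g0: "gb p N (Suc N) = 0" by (simp add: gb_def)
    have "(\<Sum>k\<le>N. gb p N k * p^(k*(k-1) div 2) * w^k) = (\<Sum>k\<le>Suc N. gb p N k * p^(k*(k-1) div 2) * w^k)"
      by (simp add: g0)
    also have "\<dots> = 1 + (\<Sum>k\<le>N. gb p N (Suc k) * p^(Suc k*(Suc k-1) div 2) * w^(Suc k))"
      by (subst sum.atMost_Suc_shift) (simp add: p)
    finally show ?thesis .
  qed
  also have "(\<Sum>k\<le>N. gb p N k * p^(k*(k-1) div 2) * p^N * w^(Suc k)) =
      (\<Sum>k\<le>N. p^(N-k) * gb p N k * p^(Suc k*(Suc k-1) div 2) * w^(Suc k))"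
  proof (intro sum.cong refl)
    fix k assume "k \<in> {..N}"
    hence "N = (N - k) + k" by simp
    hence "p^N = p^(N-k) * p^k" by (metis power_add)
    thus "gb p N k * p^(k*(k-1) div 2) * p^N * w^(Suc k) = p^(N-k) * gb p N k * p^(Suc k*(Suc k-1) div 2) * w^(Suc k)"
      by (simp add: tri_Suc power_add)
  qed
  also have "1 + (\<Sum>k\<le>N. gb p N (Suc k) * p^(Suc k*(Suc k-1) div 2) * w^(Suc k))
       + (\<Sum>k\<le>N. p^(N-k) * gb p N k * p^(Suc k*(Suc k-1) div 2) * w^(Suc k))
     = 1 + (\<Sum>k\<le>N. gb p (Suc N) (Suc k) * p^(Suc k*(Suc k-1) div 2) * w^(Suc k))"
  proof -
    have "(\<Sum>k\<le>N. gb p N (Suc k) * p^(Suc k*(Suc k-1) div 2) * w^(Suc k))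
       + (\<Sum>k\<le>N. p^(N-k) * gb p N k * p^(Suc k*(Suc k-1) div 2) * w^(Suc k))
       = (\<Sum>k\<le>N. (gb p N (Suc k) + p^(N-k) * gb p N k) * p^(Suc k*(Suc k-1) div 2) * w^(Suc k))"
      by (simp add: sum.distrib[symmetric] algebra_simps)
    also have "\<dots> = (\<Sum>k\<le>N. gb p (Suc N) (Suc k) * p^(Suc k*(Suc k-1) div 2) * w^(Suc k))"
      by (intro sum.cong refl) (simp add: gb_pascal[OF p])
    finally show ?thesis by simp
  qed
  also have "\<dots> = (\<Sum>k\<le>Suc N. gb p (Suc N) k * p^(k*(k-1) div 2) * w^k)"
    by (subst sum.atMost_Suc_shift) (simp add: p)
  finally show ?case .
qed

lemma binom2_2: "2 * binom2 x = x * (x - 1)"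
proof -
  have "even (x * (x - 1))" by auto
  thus ?thesis unfolding binom2_def by simp
qed

lemma binom2_nat: "int (k*(k-1) div 2) = binom2 (int k)"
proof -
  have "even (k * (k - 1))" by auto
  hence "2 * int (k*(k-1) div 2) = int (k*(k-1))" by (metis dvd_mult_div_cancel of_nat_mult of_nat_numeral)
  also have "\<dots> = 2 * binom2 (int k)" unfolding binom2_2 by (cases k) (auto simp: algebra_simps)
  finally show ?thesis by simp
qed

lemma binom2_nonneg: "binom2 x \<ge> 0"
proof -
  have "x * (x - 1) \<ge> 0" by (cases "x \<ge> 1") (auto simp: mult_nonpos_nonpos intro: mult_nonneg_nonneg)
  hence "2 * binom2 x \<ge> 0" using binom2_2 by simp
  thus ?thesis by simp
qed

lemma prod_lessThan_add: "(\<Prod>j<n+m. f j) = (\<Prod>j<n. f j) * (\<Prod>j<m. f (n+j))"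
  for f :: "nat \<Rightarrow> 'a::comm_monoid_mult"
  by (induction m) (auto simp: mult.assoc)

lemma finite_jtp:
  fixes p z :: complex
  assumes p: "norm p < 1" "p \<noteq> 0" and z: "z \<noteq> 0"
  shows "(\<Prod>j<n. (1 + z*p^j) * (1 + p^(Suc j)/z)) =
         (\<Sum>l\<in>{-int n..int n}. gb p (2*n) (nat (int n + l)) * p powi binom2 l * z powi l)"
proof -
  define w where "w = z / p^n"
  define K where "K = (\<Prod>j<n. z / p^(Suc j))"
  have Knz: "K \<noteq> 0" unfolding K_def using p z by simp
  have "(\<Prod>j<2*n. (1 + w*p^j)) = (\<Prod>j<n. (1 + w*p^j)) * (\<Prod>j<n. (1 + w*p^(n+j)))"
    using prod_lessThan_add[of "\<lambda>j. 1 + w*p^j" n n] by (simp add: mult_2)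
  also have "(\<Prod>j<n. (1 + w*p^(n+j))) = (\<Prod>j<n. (1 + z*p^j))"
    unfolding w_def using p by (simp add: power_add)
  also have "(\<Prod>j<n. (1 + w*p^j)) = (\<Prod>j<n. (1 + w*p^(n - Suc j)))"
    by (rule prod.nat_diff_reindex[symmetric])
  also have "\<dots> = (\<Prod>j<n. (z / p^(Suc j)) * (1 + p^(Suc j)/z))"
  proof (intro prod.cong refl)
    fix j assume "j \<in> {..<n}"
    hence "n = (n - Suc j) + Suc j" by simp
    hence "p^n = p^(n - Suc j) * p^(Suc j)" by (metis power_add)
    thus "1 + w * p ^ (n - Suc j) = z / p ^ Suc j * (1 + p ^ Suc j / z)"
      unfolding w_def using p z by (simp add: field_simps)
  qed
  also have "\<dots> = K * (\<Prod>j<n. (1 + p^(Suc j)/z))"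
    unfolding K_def by (rule prod.distrib)
  finally have L: "(\<Prod>j<2*n. (1 + w*p^j)) = K * (\<Prod>j<n. (1 + z*p^j) * (1 + p^(Suc j)/z))"
    by (simp add: prod.distrib mult_ac)
  have Kval: "K = z powi int n * p powi (- binom2 (int n + 1))"
  proof -
    have "K = z^n / p^(\<Sum>j<n. Suc j)"
      unfolding K_def by (simp add: prod_dividef power_sum)
    also have "(\<Sum>j<n. Suc j) = (n+1)*n div 2"
      by (induction n) auto
    also have "int ((n+1)*n div 2) = binom2 (int n + 1)"
      using binom2_nat[of "n+1"] by (simp add: mult.commute add.commute)
    hence "p^((n+1)*n div 2) = p powi binom2 (int n + 1)"
      by (metis power_int_of_nat)
    finally show ?thesis by (simp add: power_int_minus_divide)
  qed
  have R: "(\<Sum>k\<le>2*n. gb p (2*n) k * p^(k*(k-1) div 2) * w^k)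
      = K * (\<Sum>l\<in>{-int n..int n}. gb p (2*n) (nat (int n + l)) * p powi binom2 l * z powi l)"
  proof -
    have "(\<Sum>k\<le>2*n. gb p (2*n) k * p^(k*(k-1) div 2) * w^k)
       = (\<Sum>l\<in>{-int n..int n}. gb p (2*n) (nat (int n + l)) * p^(nat (int n + l)*(nat (int n + l)-1) div 2) * w^(nat (int n + l)))"
      by (rule sum.reindex_bij_witness[where i="\<lambda>l. nat (int n + l)" and j="\<lambda>k. int k - int n"]) auto
    also have "\<dots> = (\<Sum>l\<in>{-int n..int n}. K * (gb p (2*n) (nat (int n + l)) * p powi binom2 l * z powi l))"
    proof (intro sum.cong refl)
      fix l assume l: "l \<in> {-int n..int n}"
      define k where "k = nat (int n + l)"
      have kl: "int k = int n + l" using l k_def by simp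
      have e1: "p^(k*(k-1) div 2) = p powi binom2 (int k)"
        by (metis binom2_nat power_int_of_nat)
      have e2: "w^k = z powi int k * p powi (- (int n * int k))"
      proof -
        have "w^k = z^k / p^(n*k)" unfolding w_def by (simp add: power_divide power_mult)
        moreover have "z powi int k * p powi (- (int n * int k)) = z^k / p^(n*k)"
          by (simp add: power_int_minus_divide flip: of_nat_mult)
        ultimately show ?thesis by simp
      qed
      have ex: "binom2 (int k) + - (int n * int k) = - binom2 (int n + 1) + binom2 l"
        using binom2_2[of "int k"] binom2_2[of "int n + 1"] binom2_2[of l] kl by algebra
      have ez: "z powi int k = z powi int n * z powi l" using z kl by (simp add: power_int_add)
      have "p^(k*(k-1) div 2) * w^k = z powi int n * z powi l * p powi (binom2 (int k) + - (int n * int k))"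
        unfolding e1 e2 ez using p by (subst power_int_add) (simp_all add: mult_ac)
      also have "\<dots> = z powi int n * z powi l * p powi (- binom2 (int n + 1) + binom2 l)" by (simp only: ex)
      also have "\<dots> = K * (p powi binom2 l * z powi l)" unfolding Kval using p by (simp add: power_int_diff power_int_minus_divide field_simps)
      finally have "p^(k*(k-1) div 2) * w^k = K * (p powi binom2 l * z powi l)" .
      thus "gb p (2 * n) k * p ^ (k * (k - 1) div 2) * w ^ k = K * (gb p (2 * n) k * p powi binom2 l * z powi l)"
        by (simp add: mult_ac)
    qed
    also have "\<dots> = K * (\<Sum>l\<in>{-int n..int n}. gb p (2*n) (nat (int n + l)) * p powi binom2 l * z powi l)"
      by (simp add: sum_distrib_left)
    finally show ?thesis .
  qed
  from L R qbinomial[OF p(1), where N="2*n" and w=w] Knz show ?thesis by simp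
qed

lemma qp_conv: "norm q < 1 \<Longrightarrow> convergent_prod (\<lambda>j. 1 - a * q^j :: complex)"
proof -
  assume q: "norm q < 1"
  have "summable (\<lambda>j. norm a * norm q ^ j)"
    using q by (intro summable_mult summable_geometric) auto
  hence "summable (\<lambda>j. norm ((1 - a * q^j) - 1))" by (simp add: norm_mult norm_power)
  thus ?thesis
    by (intro abs_convergent_prod_imp_convergent_prod summable_imp_abs_convergent_prod)
qed

lemma qp_lim: "norm q < 1 \<Longrightarrow> (\<lambda>n. \<Prod>j<n. (1 - a * q^j :: complex)) \<longlonglongrightarrow> qpoch_inf a q"
  unfolding qpoch_inf_def LIMSEQ_lessThan_iff_atMost
  by (rule convergent_prod_LIMSEQ) (rule qp_conv)

lemma qp_nz:
  assumes "norm q < 1" "\<And>j. a * q^j \<noteq> 1"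
  shows "qpoch_inf a q \<noteq> 0"
  unfolding qpoch_inf_def
  by (rule prodinf_nonzero[OF qp_conv[OF assms(1)]]) (use assms(2) in auto)

lemma qpoch_nz: "norm q < 1 \<Longrightarrow> qpoch_inf q q \<noteq> 0"
  by (rule qp_nz) (auto simp: pow_Suc_ne_one)

lemma fp_lim: "norm p < 1 \<Longrightarrow> (\<lambda>n. fp p n) \<longlonglongrightarrow> qpoch_inf p p"
  unfolding fp_def using qp_lim[of p p] by simp

lemma quad_summable:
  fixes r Y :: real
  assumes r: "0 \<le> r" "r < 1" and Y: "0 \<le> Y"
  shows "summable (\<lambda>k::nat. r^(k*(k-1) div 2) * Y^k)"
proof -
  have "(\<lambda>n. r^n * Y) \<longlonglongrightarrow> 0 * Y"
    using r by (intro tendsto_mult LIMSEQ_power_zero) auto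
  hence "eventually (\<lambda>n. r^n * Y < 1/2) sequentially"
    by (intro order_tendstoD) auto
  then obtain N0 where N0: "\<And>n. n \<ge> N0 \<Longrightarrow> r^n * Y < 1/2" by (auto simp: eventually_sequentially)
  show ?thesis
  proof (rule summable_ratio_test[where c="1/2" and N="N0"])
    fix n assume n: "n \<ge> N0"
    have t: "Suc n * (Suc n - 1) div 2 = n*(n-1) div 2 + n" using tri_Suc[of n] by simp
    have "norm (r^(Suc n*(Suc n-1) div 2) * Y^Suc n) = (r^n * Y) * (r^(n*(n-1) div 2) * Y^n)"
      unfolding t using r Y by (simp add: power_add abs_mult mult_ac)
    also have "\<dots> \<le> 1/2 * (r^(n*(n-1) div 2) * Y^n)"
      using N0[OF n] r Y by (intro mult_right_mono) auto
    also have "\<dots> = 1/2 * norm (r^(n*(n-1) div 2) * Y^n)" using r Y by simp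
    finally show "norm (r^(Suc n*(Suc n-1) div 2) * Y^Suc n) \<le> 1/2 * norm (r^(n*(n-1) div 2) * Y^n)" .
  qed simp
qed

lemma int_has_sum_split:
  fixes f :: "int \<Rightarrow> 'a::banach"
  assumes s1: "summable (\<lambda>k. norm (f (int k)))" and s2: "summable (\<lambda>k. norm (f (- int k - 1)))"
  shows "(f has_sum ((\<Sum>k. f (int k)) + (\<Sum>k. f (- int k - 1)))) UNIV"
proof -
  have A: "((\<lambda>k. f (int k)) has_sum (\<Sum>k. f (int k))) UNIV"
    by (rule norm_summable_imp_has_sum[OF s1]) (rule summable_sums[OF summable_norm_cancel[OF s1]])
  have B: "((\<lambda>k. f (- int k - 1)) has_sum (\<Sum>k. f (- int k - 1))) UNIV"
    by (rule norm_summable_imp_has_sum[OF s2]) (rule summable_sums[OF summable_norm_cancel[OF s2]])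
  have A': "(f has_sum (\<Sum>k. f (int k))) (range int)"
    using A has_sum_reindex[of int UNIV f] by (simp add: o_def)
  have inj: "inj (\<lambda>k::nat. - int k - 1)" by (auto simp: inj_def)
  have B': "(f has_sum (\<Sum>k. f (- int k - 1))) (range (\<lambda>k::nat. - int k - 1))"
    using B has_sum_reindex[OF inj, of f] by (simp add: o_def)
  have U: "range int \<union> range (\<lambda>k::nat. - int k - 1) = UNIV"
  proof (rule set_eqI, rule iffI)
    fix x :: int
    show "x \<in> range int \<union> range (\<lambda>k::nat. - int k - 1)"
    proof (cases "x \<ge> 0")
      case True thus ?thesis by (intro UnI1 image_eqI[where x="nat x"]) auto
    next
      case False thus ?thesis by (intro UnI2 image_eqI[where x="nat (-x-1)"]) auto
    qed
  qed simp
  have D: "range int \<inter> range (\<lambda>k::nat. - int k - 1) = {}" by auto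
  show ?thesis using has_sum_Un_disjoint[OF A' B' D] unfolding U .
qed
lemma binom2_neg: "binom2 (- int k - 1) = int (k*(k-1) div 2) + 2 * int k + 1"
proof -
  have "2 * binom2 (- int k - 1) = 2 * (binom2 (int k) + 2 * int k + 1)"
    using binom2_2[of "- int k - 1"] binom2_2[of "int k"] by algebra
  hence "binom2 (- int k - 1) = binom2 (int k) + 2 * int k + 1" by simp
  thus ?thesis by (simp only: binom2_nat)
qed

definition jt :: "complex \<Rightarrow> complex \<Rightarrow> int \<Rightarrow> complex" where
  "jt z p l = z powi l * p powi binom2 l"

lemma jt_norm_pos: "norm (jt z p (int k)) = norm p ^ (k*(k-1) div 2) * norm z ^ k"
  unfolding jt_def by (simp add: norm_mult norm_power norm_power_int binom2_nat[symmetric] del: of_nat_diff)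

lemma jt_norm_neg:
  assumes "z \<noteq> 0"
  shows "norm (jt z p (- int k - 1)) = (norm p / norm z) * (norm p ^ (k*(k-1) div 2) * (norm p ^ 2 / norm z) ^ k)"
proof -
  have "norm (jt z p (- int k - 1)) = norm z powi (- int k - 1) * norm p powi (int (k*(k-1) div 2) + 2 * int k + 1)"
    unfolding jt_def binom2_neg by (simp add: norm_mult norm_power_int)
  also have "norm p powi (int (k*(k-1) div 2) + 2 * int k + 1) = norm p ^ (k*(k-1) div 2 + 2*k + 1)"
    by (metis (no_types, lifting) of_nat_1 of_nat_add of_nat_mult of_nat_numeral power_int_of_nat)
  also have "norm z powi (- int k - 1) = 1 / norm z ^ (Suc k)"
    by (metis diff_minus_eq_add minus_add_distrib of_nat_Suc add.commute power_int_minus_divide power_int_of_nat uminus_add_conv_diff)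
  also have "norm p ^ (k*(k-1) div 2 + 2*k + 1) = norm p ^ (k*(k-1) div 2) * norm p^(2*k) * norm p"
    by (simp add: power_add)
  also have "norm z ^ Suc k = norm z * norm z ^ k" by simp
  finally have e: "norm (jt z p (- int k - 1)) = 1 / (norm z * norm z ^ k) * (norm p ^ (k*(k-1) div 2) * norm p^(2*k) * norm p)" .
  have "(norm p ^ 2 / norm z) ^ k = norm p ^ (2*k) / norm z ^ k"
    by (simp add: power_divide power_mult)
  hence "(norm p / norm z) * (norm p ^ (k*(k-1) div 2) * (norm p ^ 2 / norm z) ^ k)
      = (norm p / norm z) * (norm p ^ (k*(k-1) div 2) * (norm p ^ (2*k) / norm z ^ k))" by simp
  also have "\<dots> = 1 / (norm z * norm z ^ k) * (norm p ^ (k*(k-1) div 2) * norm p^(2*k) * norm p)"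
    by (simp add: divide_simps mult_ac)
  finally show ?thesis unfolding e by simp
qed

lemma jt_summable:
  assumes p: "norm p < 1" and z: "z \<noteq> 0"
  shows "summable (\<lambda>k. norm (jt z p (int k)))" "summable (\<lambda>k. norm (jt z p (- int k - 1)))"
proof -
  show "summable (\<lambda>k. norm (jt z p (int k)))"
    unfolding jt_norm_pos using p quad_summable[of "norm p" "norm z"] by simp
  show "summable (\<lambda>k. norm (jt z p (- int k - 1)))"
    unfolding jt_norm_neg[OF z] using p quad_summable[of "norm p" "norm p ^ 2 / norm z"] by (intro summable_mult) simp
qed

lemma gb_bound:
  assumes p: "norm p < 1"
  obtains C where "C > 0" "\<And>N k. norm (gb p N k) \<le> C"
proof -
  have L: "qpoch_inf p p \<noteq> 0" using qpoch_nz[OF p] .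
  have "convergent (\<lambda>n. fp p n)" using fp_lim[OF p] by (auto simp: convergent_def)
  then obtain U where U: "U > 0" "\<And>n. norm (fp p n) \<le> U"
    using convergent_imp_Bseq by (auto elim!: BseqE)
  have "(\<lambda>n. inverse (fp p n)) \<longlonglongrightarrow> inverse (qpoch_inf p p)"
    using fp_lim[OF p] L by (intro tendsto_inverse) auto
  hence "convergent (\<lambda>n. inverse (fp p n))" by (auto simp: convergent_def)
  then obtain V where V: "V > 0" "\<And>n. norm (inverse (fp p n)) \<le> V"
    using convergent_imp_Bseq by (auto elim!: BseqE)
  show ?thesis
  proof (rule that[of "U * V * V"])
    show "U * V * V > 0" using U V by simp
    fix N k
    show "norm (gb p N k) \<le> U * V * V"
    proof (cases "k \<le> N")
      case True
      have "norm (gb p N k) = norm (fp p N) * norm (inverse (fp p k)) * norm (inverse (fp p (N - k)))"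
        using True by (simp add: gb_def norm_mult norm_divide norm_inverse divide_inverse)
      also have "\<dots> \<le> U * V * V"
        using U V by (intro mult_mono) (auto intro: mult_nonneg_nonneg)
      finally show ?thesis .
    next
      case False thus ?thesis using U V by (simp add: gb_def)
    qed
  qed
qed

lemma gb_lim1:
  assumes p: "norm p < 1"
  shows "(\<lambda>n. gb p (2*n) (n + k)) \<longlonglongrightarrow> inverse (qpoch_inf p p)"
proof -
  define L where "L = qpoch_inf p p"
  have L: "L \<noteq> 0" using qpoch_nz[OF p] L_def by simp
  have f1: "(\<lambda>n. fp p (2*n)) \<longlonglongrightarrow> L"
    unfolding L_def by (rule filterlim_compose[OF fp_lim[OF p] mult_nat_left_at_top]) simp
  have f2: "(\<lambda>n. fp p (n + k)) \<longlonglongrightarrow> L"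
    unfolding L_def by (rule filterlim_compose[OF fp_lim[OF p] filterlim_add_const_nat_at_top])
  have f3: "(\<lambda>n. fp p (n - k)) \<longlonglongrightarrow> L"
    unfolding L_def by (rule filterlim_compose[OF fp_lim[OF p] filterlim_minus_const_nat_at_top])
  have "(\<lambda>n. fp p (2*n) * inverse (fp p (n + k)) * inverse (fp p (n - k))) \<longlonglongrightarrow> L * inverse L * inverse L"
    using L by (intro tendsto_mult tendsto_inverse f1 f2 f3)
  hence "(\<lambda>n. fp p (2*n) * inverse (fp p (n + k)) * inverse (fp p (n - k))) \<longlonglongrightarrow> inverse L"
    using L by simp
  moreover have "eventually (\<lambda>n. fp p (2*n) * inverse (fp p (n + k)) * inverse (fp p (n - k)) = gb p (2*n) (n + k)) sequentially"
    using eventually_ge_at_top[of k]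
  proof eventually_elim
    case (elim n)
    hence "2*n - (n+k) = n - k" by simp
    thus ?case using elim by (simp add: gb_def divide_inverse mult.assoc)
  qed
  ultimately show ?thesis unfolding L_def by (rule Lim_transform_eventually)
qed

lemma gb_lim2:
  assumes p: "norm p < 1"
  shows "(\<lambda>n. gb p (2*n) (n - Suc k)) \<longlonglongrightarrow> inverse (qpoch_inf p p)"
proof -
  define L where "L = qpoch_inf p p"
  have L: "L \<noteq> 0" using qpoch_nz[OF p] L_def by simp
  have f1: "(\<lambda>n. fp p (2*n)) \<longlonglongrightarrow> L"
    unfolding L_def by (rule filterlim_compose[OF fp_lim[OF p] mult_nat_left_at_top]) simp
  have f2: "(\<lambda>n. fp p (n - Suc k)) \<longlonglongrightarrow> L"
    unfolding L_def by (rule filterlim_compose[OF fp_lim[OF p] filterlim_minus_const_nat_at_top])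
  have f3: "(\<lambda>n. fp p (n + Suc k)) \<longlonglongrightarrow> L"
    unfolding L_def by (rule filterlim_compose[OF fp_lim[OF p] filterlim_add_const_nat_at_top])
  have "(\<lambda>n. fp p (2*n) * inverse (fp p (n - Suc k)) * inverse (fp p (n + Suc k))) \<longlonglongrightarrow> L * inverse L * inverse L"
    using L by (intro tendsto_mult tendsto_inverse f1 f2 f3)
  hence "(\<lambda>n. fp p (2*n) * inverse (fp p (n - Suc k)) * inverse (fp p (n + Suc k))) \<longlonglongrightarrow> inverse L"
    using L by simp
  moreover have "eventually (\<lambda>n. fp p (2*n) * inverse (fp p (n - Suc k)) * inverse (fp p (n + Suc k)) = gb p (2*n) (n - Suc k)) sequentially"
    using eventually_ge_at_top[of "Suc k"]
  proof eventually_elim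
    case (elim n)
    hence "2*n - (n - Suc k) = n + Suc k" by simp
    thus ?case using elim by (simp add: gb_def divide_inverse mult.assoc)
  qed
  ultimately show ?thesis unfolding L_def by (rule Lim_transform_eventually)
qed

lemma sum_int_sym_split:
  fixes g :: "int \<Rightarrow> 'a::comm_monoid_add"
  shows "(\<Sum>l\<in>{-int n..int n}. g l) = (\<Sum>k\<le>n. g (int k)) + (\<Sum>k<n. g (- int k - 1))"
proof -
  have U: "{-int n..int n} = int ` {..n} \<union> (\<lambda>k. - int k - 1) ` {..<n}"
  proof (rule set_eqI, rule iffI)
    fix x assume x: "x \<in> {-int n..int n}"
    show "x \<in> int ` {..n} \<union> (\<lambda>k. - int k - 1) ` {..<n}"
    proof (cases "x \<ge> 0")
      case True thus ?thesis using x by (intro UnI1 image_eqI[where x="nat x"]) auto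
    next
      case False thus ?thesis using x by (intro UnI2 image_eqI[where x="nat (-x-1)"]) auto
    qed
  qed auto
  have D: "int ` {..n} \<inter> (\<lambda>k. - int k - 1) ` {..<n} = {}" by auto
  have i1: "inj_on int {..n}" by (auto simp: inj_on_def)
  have i2: "inj_on (\<lambda>k::nat. - int k - 1) {..<n}" by (auto simp: inj_on_def)
  show ?thesis unfolding U
    by (subst sum.union_disjoint) (use D in \<open>auto simp: sum.reindex[OF i1] sum.reindex[OF i2] o_def\<close>)
qed

theorem jtp:
  assumes p: "norm p < 1" "p \<noteq> 0" and z: "z \<noteq> 0"
  shows "(jt z p has_sum (qpoch_inf p p * qpoch_inf (-z) p * qpoch_inf (-p/z) p)) UNIV"
proof -
  define L where "L = qpoch_inf p p"
  have Lnz: "L \<noteq> 0" using qpoch_nz[OF p(1)] L_def by simp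
  define A where "A = (\<Sum>k. jt z p (int k))"
  define B where "B = (\<Sum>k. jt z p (- int k - 1))"
  note sm = jt_summable[OF p(1) z]
  have hS: "(jt z p has_sum (A + B)) UNIV"
    unfolding A_def B_def by (rule int_has_sum_split[OF sm])
  obtain C where C: "C > 0" "\<And>N k. norm (gb p N k) \<le> C" using gb_bound[OF p(1)] by blast
  define Q where "Q = qpoch_inf (-z) p * qpoch_inf (-p/z) p"
  define R where "R = (\<lambda>n. \<Sum>l\<in>{-int n..int n}. gb p (2*n) (nat (int n + l)) * p powi binom2 l * z powi l)"
  have LQ: "(\<lambda>n. \<Prod>j<n. (1 + z*p^j) * (1 + p^(Suc j)/z)) \<longlonglongrightarrow> Q"
  proof -
    have "(\<lambda>n. (\<Prod>j<n. (1 - (-z)*p^j)) * (\<Prod>j<n. (1 - (-p/z)*p^j))) \<longlonglongrightarrow> Q"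
      unfolding Q_def by (intro tendsto_mult qp_lim p)
    moreover have "(\<Prod>j<n. (1 - (-z)*p^j)) * (\<Prod>j<n. (1 - (-p/z)*p^j)) = (\<Prod>j<n. (1 + z*p^j) * (1 + p^(Suc j)/z))" for n
      by (simp add: prod.distrib)
    ultimately show ?thesis by simp
  qed
  hence RQ: "R \<longlonglongrightarrow> Q" unfolding R_def using finite_jtp[OF p z] by simp
  define a1 where "a1 = (\<lambda>k n. if k \<le> n then gb p (2*n) (n + k) * jt z p (int k) else 0)"
  define a2 where "a2 = (\<lambda>k n. if k < n then gb p (2*n) (n - Suc k) * jt z p (- int k - 1) else 0)"
  have T1: "(\<lambda>n. suminf (\<lambda>k. a1 k n)) \<longlonglongrightarrow> suminf (\<lambda>k. inverse L * jt z p (int k))"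
  proof (rule tannerys_theorem[where M="\<lambda>k. C * norm (jt z p (int k))", THEN conjunct2, THEN conjunct2])
    fix k
    have "(\<lambda>n. gb p (2*n) (n + k) * jt z p (int k)) \<longlonglongrightarrow> inverse L * jt z p (int k)"
      unfolding L_def by (intro tendsto_mult gb_lim1 p tendsto_const)
    moreover have "eventually (\<lambda>n. gb p (2*n) (n + k) * jt z p (int k) = a1 k n) sequentially"
      using eventually_ge_at_top[of k] by eventually_elim (simp add: a1_def)
    ultimately show "(\<lambda>n. a1 k n) \<longlonglongrightarrow> inverse L * jt z p (int k)" by (rule Lim_transform_eventually)
  next
    show "eventually (\<lambda>(k, n). norm (a1 k n) \<le> C * norm (jt z p (int k))) (at_top \<times>\<^sub>F sequentially)"
      by (intro always_eventually) (use C in \<open>auto simp: a1_def norm_mult intro: mult_right_mono\<close>)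
  next
    show "summable (\<lambda>k. C * norm (jt z p (int k)))" using sm(1) by (rule summable_mult)
  qed simp
  have T2: "(\<lambda>n. suminf (\<lambda>k. a2 k n)) \<longlonglongrightarrow> suminf (\<lambda>k. inverse L * jt z p (- int k - 1))"
  proof (rule tannerys_theorem[where M="\<lambda>k. C * norm (jt z p (- int k - 1))", THEN conjunct2, THEN conjunct2])
    fix k
    have "(\<lambda>n. gb p (2*n) (n - Suc k) * jt z p (- int k - 1)) \<longlonglongrightarrow> inverse L * jt z p (- int k - 1)"
      unfolding L_def by (intro tendsto_mult gb_lim2 p tendsto_const)
    moreover have "eventually (\<lambda>n. gb p (2*n) (n - Suc k) * jt z p (- int k - 1) = a2 k n) sequentially"
      using eventually_ge_at_top[of "Suc k"] by eventually_elim (simp add: a2_def)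
    ultimately show "(\<lambda>n. a2 k n) \<longlonglongrightarrow> inverse L * jt z p (- int k - 1)" by (rule Lim_transform_eventually)
  next
    show "eventually (\<lambda>(k, n). norm (a2 k n) \<le> C * norm (jt z p (- int k - 1))) (at_top \<times>\<^sub>F sequentially)"
      by (intro always_eventually) (use C in \<open>auto simp: a2_def norm_mult intro: mult_right_mono\<close>)
  next
    show "summable (\<lambda>k. C * norm (jt z p (- int k - 1)))" using sm(2) by (rule summable_mult)
  qed simp
  have s1: "suminf (\<lambda>k. inverse L * jt z p (int k)) = inverse L * A"
    unfolding A_def by (rule suminf_mult[OF summable_norm_cancel[OF sm(1)]])
  have s2: "suminf (\<lambda>k. inverse L * jt z p (- int k - 1)) = inverse L * B"
    unfolding B_def by (rule suminf_mult[OF summable_norm_cancel[OF sm(2)]])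
  have Rsplit: "R n = suminf (\<lambda>k. a1 k n) + suminf (\<lambda>k. a2 k n)" for n
  proof -
    have e1: "suminf (\<lambda>k. a1 k n) = (\<Sum>k\<le>n. a1 k n)"
      by (rule suminf_finite) (auto simp: a1_def)
    have e2: "suminf (\<lambda>k. a2 k n) = (\<Sum>k<n. a2 k n)"
      by (rule suminf_finite) (auto simp: a2_def)
    have e3: "(\<Sum>k\<le>n. a1 k n) = (\<Sum>k\<le>n. gb p (2*n) (nat (int n + int k)) * p powi binom2 (int k) * z powi (int k))"
      by (intro sum.cong refl) (auto simp: a1_def jt_def nat_add_distrib mult_ac)
    have e4: "(\<Sum>k<n. a2 k n) = (\<Sum>k<n. gb p (2*n) (nat (int n + (- int k - 1))) * p powi binom2 (- int k - 1) * z powi (- int k - 1))"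
    proof (intro sum.cong refl)
      fix k assume "k \<in> {..<n}"
      hence "nat (int n + (- int k - 1)) = n - Suc k" by auto
      thus "a2 k n = gb p (2*n) (nat (int n + (- int k - 1))) * p powi binom2 (- int k - 1) * z powi (- int k - 1)"
        using \<open>k \<in> {..<n}\<close> by (simp add: a2_def jt_def mult_ac)
    qed
    show ?thesis unfolding R_def e1 e2 e3 e4 by (rule sum_int_sym_split)
  qed
  have "R \<longlonglongrightarrow> inverse L * A + inverse L * B"
    unfolding Rsplit using T1 T2 s1 s2 by (metis tendsto_add)
  with RQ have "inverse L * A + inverse L * B = Q" using LIMSEQ_unique by blast
  hence "A + B = L * Q" using Lnz by (simp add: field_simps)
  thus ?thesis using hS unfolding L_def Q_def by (simp add: mult.assoc)
qed

lemma m1_pow: "(-1::complex) ^ n = (if even n then 1 else -1)"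
  by (simp add: neg_one_even_power neg_one_odd_power)

lemma m1_powi: "(-1::complex) powi k = (if even k then 1 else -1)"
proof (cases "k \<ge> 0")
  case True
  then obtain n where n: "k = int n" using nonneg_int_cases by blast
  show ?thesis unfolding n by (simp add: m1_pow)
next
  case False
  then obtain n where n: "k = - int n" using nonneg_int_cases[of "-k"] by (metis minus_minus neg_0_le_iff_le nle_le)
  have "(-1::complex) powi k = inverse ((-1) ^ n)" unfolding n power_int_minus by simp
  thus ?thesis using n by (simp add: m1_pow)
qed

lemma powi_split: "r \<noteq> 0 \<Longrightarrow> A = B + C \<Longrightarrow> r powi A = r powi B * (r powi C :: complex)"
  by (simp add: power_int_add)

lemma qpoch_split3:
  assumes r: "norm r < 1"
  shows "qpoch_inf (r^3) (r^3) * qpoch_inf r (r^3) * qpoch_inf (r^2) (r^3) = qpoch_inf r r"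
proof -
  have r3: "norm (r^3) < 1" using r by (simp add: norm_power power_less_one_iff)
  have e: "(\<Prod>j<n. (1 - r^3 * (r^3)^j)) * (\<Prod>j<n. (1 - r * (r^3)^j)) * (\<Prod>j<n. (1 - r^2 * (r^3)^j))
        = (\<Prod>i<3*n. (1 - r * r^i))" for n
  proof (induction n)
    case 0 show ?case by simp
  next
    case (Suc n)
    have "3 * Suc n = Suc (Suc (Suc (3*n)))" by simp
    hence "(\<Prod>i<3*Suc n. (1 - r * r^i)) = (\<Prod>i<3*n. (1 - r * r^i)) * ((1 - r*r^(3*n)) * (1 - r*r^(Suc (3*n))) * (1 - r * r^(Suc (Suc (3*n)))))"
      by (simp only: prod.lessThan_Suc mult_ac)
    also have "(1 - r*r^(3*n)) * (1 - r*r^(Suc (3*n))) * (1 - r * r^(Suc (Suc (3*n)))) =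
               (1 - r^3 * (r^3)^n) * (1 - r * (r^3)^n) * (1 - r^2 * (r^3)^n)"
    proof -
      have x: "(r^3)^n = r^(3*n)" by (simp add: power_mult)
      have "r*r^(3*n) = r*(r^3)^n" "r*r^(Suc(3*n)) = r^2*(r^3)^n" "r*r^(Suc(Suc(3*n))) = r^3*(r^3)^n"
        unfolding x by (simp_all add: power2_eq_square power3_eq_cube)
      thus ?thesis by (simp only: mult_ac)
    qed
    finally show ?case using Suc by (simp add: mult_ac)
  qed
  have "(\<lambda>n. (\<Prod>j<n. (1 - r^3 * (r^3)^j)) * (\<Prod>j<n. (1 - r * (r^3)^j)) * (\<Prod>j<n. (1 - r^2 * (r^3)^j)))
     \<longlonglongrightarrow> qpoch_inf (r^3) (r^3) * qpoch_inf r (r^3) * qpoch_inf (r^2) (r^3)"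
    by (intro tendsto_mult qp_lim r3)
  moreover have "(\<lambda>n. \<Prod>i<3*n. (1 - r * r^i)) \<longlonglongrightarrow> qpoch_inf r r"
    by (rule filterlim_compose[OF qp_lim[OF r] mult_nat_left_at_top]) simp
  ultimately show ?thesis unfolding e using LIMSEQ_unique by blast
qed

lemma qpoch_one_zero: "norm q < 1 \<Longrightarrow> qpoch_inf 1 q = 0"
proof -
  assume q: "norm q < 1"
  have "(\<lambda>j. 1 - 1*q^j) has_prod qpoch_inf 1 q" unfolding qpoch_inf_def
    by (rule convergent_prod_has_prod[OF qp_conv[OF q]])
  thus ?thesis by (rule has_prod_zeroI[where n=0]) simp
qed

definition Eterm :: "complex \<Rightarrow> int \<Rightarrow> int \<Rightarrow> complex" where
  "Eterm r c k = (-1) powi k * r powi (3 * binom2 k + c * k)"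

definition Ev :: "complex \<Rightarrow> int \<Rightarrow> complex" where
  "Ev r c = (if c mod 3 = 0 then 0 else
      (-1) powi (c div 3) * r powi (- ((c mod 3) * (c div 3) + 3 * binom2 (c div 3))) * qpoch_inf r r)"

lemma Eterm_jt: "r \<noteq> 0 \<Longrightarrow> Eterm r c k = jt (- (r powi c)) (r^3) k"
proof -
  assume r: "r \<noteq> 0"
  have a: "(- (r powi c)) powi k = (-1) powi k * r powi (c * k)"
    using power_int_mult_distrib[of "-1" "r powi c" k] by (simp add: power_int_mult)
  have b: "(r^3) powi binom2 k = r powi (3 * binom2 k)"
    by (simp add: power_int_power)
  have "r powi (3 * binom2 k + c * k) = r powi (c * k) * r powi (3 * binom2 k)"
    by (rule powi_split[OF r]) simp
  thus ?thesis unfolding Eterm_def jt_def a b by (simp add: mult_ac)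
qed

lemma E_base:
  assumes r: "norm r < 1" "r \<noteq> 0" and rho: "rho \<in> {0,1,2::int}"
  shows "(Eterm r rho has_sum (if rho = 0 then 0 else qpoch_inf r r)) UNIV"
proof -
  have r3: "norm (r^3) < 1" using r by (simp add: norm_power power_less_one_iff)
  have z: "- (r powi rho) \<noteq> 0" using r by simp
  have J: "(Eterm r rho has_sum (qpoch_inf (r^3) (r^3) * qpoch_inf (r powi rho) (r^3) * qpoch_inf (r^3 / r powi rho) (r^3))) UNIV"
  proof -
    have fe: "Eterm r rho = jt (- (r powi rho)) (r^3)" by (rule ext) (rule Eterm_jt[OF r(2)])
    show ?thesis unfolding fe using jtp[OF r3 _ z] r by simp
  qed
  consider "rho = 0" | "rho = 1" | "rho = 2" using rho by auto
  thus ?thesis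
  proof cases
    case 1 thus ?thesis using J qpoch_one_zero[OF r3] by simp
  next
    case 2
    have "r^3 / r = r^2" using r by (simp add: power3_eq_cube power2_eq_square)
    thus ?thesis using J 2 qpoch_split3[OF r(1)] by simp
  next
    case 3
    have "r^3 / r^2 = r" using r by (simp add: power3_eq_cube power2_eq_square)
    thus ?thesis using J 3 qpoch_split3[OF r(1)] by (simp add: mult_ac)
  qed
qed

lemma Eterm_shift:
  assumes r: "r \<noteq> 0"
  shows "Eterm r (3*t + rho) (m - t) = ((-1) powi t * r powi (- (rho * t + 3 * binom2 t))) * Eterm r rho m"
proof -
  have s: "(-1::complex) powi (m - t) = (-1) powi t * (-1) powi m"
    unfolding m1_powi by (auto simp: even_diff)
  have e: "3 * binom2 (m - t) + (3*t + rho) * (m - t) = - (rho * t + 3 * binom2 t) + (3 * binom2 m + rho * m)"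
    using binom2_2[of "m - t"] binom2_2[of t] binom2_2[of m] by algebra
  show ?thesis unfolding Eterm_def s powi_split[OF r e] by (simp add: mult_ac)
qed

lemma E_val:
  assumes r: "norm r < 1" "r \<noteq> 0"
  shows "(Eterm r c has_sum Ev r c) UNIV"
proof -
  define t where "t = c div 3"
  define rho where "rho = c mod 3"
  have c: "c = 3*t + rho" unfolding t_def rho_def by simp
  have rho: "rho \<in> {0,1,2}" unfolding rho_def by auto
  define K where "K = (-1) powi t * r powi (- (rho * t + 3 * binom2 t))"
  have B: "((\<lambda>m. K * Eterm r rho m) has_sum (K * (if rho = 0 then 0 else qpoch_inf r r))) UNIV"
    by (rule has_sum_cmult_right[OF E_base[OF r rho]])
  have "((\<lambda>m. K * Eterm r rho m) has_sum (K * (if rho = 0 then 0 else qpoch_inf r r))) UNIV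
      = (Eterm r c has_sum (K * (if rho = 0 then 0 else qpoch_inf r r))) UNIV"
    by (rule has_sum_reindex_bij_witness[where i="\<lambda>k. k + t" and j="\<lambda>m. m - t"])
       (auto simp: c K_def Eterm_shift[OF r(2)])
  with B have "(Eterm r c has_sum (K * (if rho = 0 then 0 else qpoch_inf r r))) UNIV" by simp
  moreover have "K * (if rho = 0 then 0 else qpoch_inf r r) = Ev r c"
    unfolding Ev_def K_def t_def rho_def by simp
  ultimately show ?thesis by simp
qed

lemma abs_summable_product_family:
  fixes u :: "'a \<Rightarrow> complex" and v :: "'b \<Rightarrow> complex"
  assumes u: "(\<lambda>x. norm (u x)) summable_on A" and v: "(\<lambda>x. norm (v x)) summable_on B"
  shows "(\<lambda>z. norm ((\<lambda>(x,y). u x * v y) z)) summable_on (A \<times> B)"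
proof -
  have "(\<lambda>x. norm (u x) * infsum (\<lambda>y. norm (v y)) B) summable_on A"
    using u by (rule summable_on_cmult_left)
  moreover have "infsum (\<lambda>y. norm (u x * v y)) B = norm (u x) * infsum (\<lambda>y. norm (v y)) B" for x
    by (simp add: norm_mult infsum_cmult_right')
  ultimately have o: "(\<lambda>x. norm (infsum (\<lambda>y. norm (u x * v y)) B)) summable_on A"
    by (simp add: infsum_nonneg)
  have i: "\<forall>x\<in>A. (\<lambda>y. norm (u x * v y)) summable_on B"
    using v by (auto simp: norm_mult intro: summable_on_cmult_right)
  show ?thesis
    using Infinite_Sum.abs_summable_on_Sigma_iff[where f="\<lambda>(x,y). u x * v y" and A=A and B="\<lambda>_. B"] o i by simp
qed

lemma has_sum_product_family:
  fixes u :: "'a \<Rightarrow> complex" and v :: "'b \<Rightarrow> complex"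
  assumes u: "(u has_sum U) A" "(\<lambda>x. norm (u x)) summable_on A" and v: "(v has_sum V) B" "(\<lambda>x. norm (v x)) summable_on B"
  shows "((\<lambda>(x,y). u x * v y) has_sum (U * V)) (A \<times> B)"
proof -
  have s: "(\<lambda>(x,y). u x * v y) summable_on (A \<times> B)"
    by (rule abs_summable_summable[OF abs_summable_product_family[OF u(2) v(2)]])
  show ?thesis
  proof (rule has_sum_SigmaI[where g="\<lambda>x. u x * V"])
    show "((\<lambda>y. (\<lambda>(x,y). u x * v y) (x, y)) has_sum u x * V) B" for x
      using has_sum_cmult_right[OF v(1), of "u x"] by simp
    show "((\<lambda>x. u x * V) has_sum U * V) A" by (rule has_sum_cmult_left[OF u(1)])
  qed (use s in simp)
qed

definition nf :: "complex \<Rightarrow> int \<Rightarrow> int \<Rightarrow> complex" where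
  "nf q s e = (-1) powi s * q powi e"

lemma nf_mult: "q \<noteq> 0 \<Longrightarrow> nf q a b * nf q c d = nf q (a + c) (b + d)"
  unfolding nf_def by (simp add: power_int_add mult_ac)

lemma nf_eq: "even (s1 - s2) \<Longrightarrow> e1 = e2 \<Longrightarrow> nf q s1 e1 = nf q s2 e2"
  unfolding nf_def m1_powi by (auto simp: even_diff)

lemma nf_pow: "(q^k) powi e = nf q 0 (int k * e)"
  unfolding nf_def by (simp add: power_int_power)

lemma dm3: "c = 3*t + r \<Longrightarrow> 0 \<le> r \<Longrightarrow> r < 3 \<Longrightarrow> c div 3 = t \<and> c mod (3::int) = r"
  by auto

lemma nf_base: "nf (q^k) s e = nf q s (int k * e)"
  unfolding nf_def by (simp add: power_int_power)

definition pre :: "complex \<Rightarrow> int \<Rightarrow> int \<Rightarrow> complex" where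
  "pre q i j = nf q (i + j) (binom2 (i + j) + i^2 + j^2)"

definition Evn :: "complex \<Rightarrow> int \<Rightarrow> complex" where
  "Evn r c = (if c mod 3 = 0 then 0 else nf r (c div 3) (- ((c mod 3) * (c div 3) + 3 * binom2 (c div 3))))"

lemma Ev_Evn: "Ev r c = Evn r c * qpoch_inf r r"
  unfolding Ev_def Evn_def nf_def by simp

definition f2 :: "complex \<Rightarrow> int \<Rightarrow> int \<Rightarrow> complex" where
  "f2 q i j = pre q i j * Evn q (i + j + 1)"

definition cN :: "complex \<Rightarrow> int \<Rightarrow> int \<Rightarrow> complex" where
  "cN q e N = nf q N (e * N + 20 * binom2 N) * Evn (q^40) (N + 1)"

lemma Evn_val: "c = 3*t + rho \<Longrightarrow> rho \<in> {1,2} \<Longrightarrow> Evn r c = nf r t (- (rho * t + 3 * binom2 t))"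
  using dm3[of c t rho] unfolding Evn_def by auto

lemma Evn_zero: "c = 3*t \<Longrightarrow> Evn r c = 0"
  unfolding Evn_def by simp

lemma f2_val:
  assumes q: "q \<noteq> 0" and c: "i + j + 1 = 3*t + rho" and rho: "rho \<in> {1,2}"
  shows "f2 q i j = nf q (i + j + t) (binom2 (i + j) + i^2 + j^2 - (rho * t + 3 * binom2 t))"
  unfolding f2_def pre_def Evn_val[OF c rho] nf_mult[OF q] by (simp add: algebra_simps)

lemma cN_val:
  assumes q: "q \<noteq> 0" and c: "N + 1 = 3*t + rho" and rho: "rho \<in> {1,2}"
  shows "cN q e N = nf q (N + t) (e * N + 20 * binom2 N - 40 * (rho * t + 3 * binom2 t))"
  unfolding cN_def Evn_val[OF c rho] nf_base nf_mult[OF q] by (simp add: algebra_simps)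

lemma jt_q2: "q \<noteq> 0 \<Longrightarrow> jt (q^2) (q^4) m = nf q 0 (2 * m + 4 * binom2 m)"
  unfolding jt_def nf_def by (simp add: power_int_power power_int_add)

lemma jt_1: "jt 1 (q^4) m = nf q 0 (4 * binom2 m)"
  unfolding jt_def nf_def by (simp add: power_int_power)

lemma f2_D0:
  assumes q: "q \<noteq> 0"
  shows "f2 q (- N - m) (m - N) = jt (q^2) (q^4) m * cN q 4 N"
proof -
  obtain n rho where N: "N = 3*n + rho" and rho: "rho \<in> {0,1,2}"
    using dm3[of N "N div 3" "N mod 3"] by (intro that[of "N div 3" "N mod 3"]) auto
  consider "rho = 0" | "rho = 1" | "rho = 2" using rho by auto
  thus ?thesis
  proof cases
    case 1
    have L: "f2 q (- N - m) (m - N) = nf q ((- N - m) + (m - N) + (-2*n)) (binom2 ((- N - m) + (m - N)) + (- N - m)^2 + (m - N)^2 - (1 * (-2*n) + 3 * binom2 (-2*n)))"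
      by (rule f2_val[OF q]) (use N 1 in auto)
    have R: "cN q 4 N = nf q (N + n) (4 * N + 20 * binom2 N - 40 * (1 * n + 3 * binom2 n))"
      by (rule cN_val[OF q]) (use N 1 in auto)
    show ?thesis unfolding L R jt_q2[OF q] nf_mult[OF q]
      apply (rule nf_eq)
      subgoal using N 1 by presburger
      subgoal using binom2_2[of "- N - m + (m - N)"] binom2_2[of "-2*n"] binom2_2[of m] binom2_2[of N] binom2_2[of n] N 1 by algebra
      done
  next
    case 2
    have L: "f2 q (- N - m) (m - N) = nf q ((- N - m) + (m - N) + (-2*n-1)) (binom2 ((- N - m) + (m - N)) + (- N - m)^2 + (m - N)^2 - (2 * (-2*n-1) + 3 * binom2 (-2*n-1)))"
      by (rule f2_val[OF q]) (use N 2 in auto)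
    have R: "cN q 4 N = nf q (N + n) (4 * N + 20 * binom2 N - 40 * (2 * n + 3 * binom2 n))"
      by (rule cN_val[OF q]) (use N 2 in auto)
    show ?thesis unfolding L R jt_q2[OF q] nf_mult[OF q]
      apply (rule nf_eq)
      subgoal using N 2 by presburger
      subgoal using binom2_2[of "- N - m + (m - N)"] binom2_2[of "-2*n-1"] binom2_2[of m] binom2_2[of N] binom2_2[of n] N 2 by algebra
      done
  next
    case 3
    have "f2 q (- N - m) (m - N) = 0" unfolding f2_def
      by (subst Evn_zero[where t="-2*n-1"]) (use N 3 in auto)
    moreover have "cN q 4 N = 0" unfolding cN_def
      by (subst Evn_zero[where t="n+1"]) (use N 3 in auto)
    ultimately show ?thesis by simp
  qed
qed

lemma nf_mq: "- q = nf q 1 1"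
  unfolding nf_def by simp

lemma f2_D1:
  assumes q: "q \<noteq> 0"
  shows "f2 q (N + 1 - m) (N + m) = (- q) * (jt 1 (q^4) m * cN q 6 N)"
proof -
  obtain n rho where N: "N = 3*n + rho" and rho: "rho \<in> {0,1,2}"
    using dm3[of N "N div 3" "N mod 3"] by (intro that[of "N div 3" "N mod 3"]) auto
  consider "rho = 0" | "rho = 1" | "rho = 2" using rho by auto
  thus ?thesis
  proof cases
    case 1
    have L: "f2 q (N + 1 - m) (N + m) = nf q ((N + 1 - m) + (N + m) + (2*n)) (binom2 ((N + 1 - m) + (N + m)) + (N + 1 - m)^2 + (N + m)^2 - (2 * (2*n) + 3 * binom2 (2*n)))"
      by (rule f2_val[OF q]) (use N 1 in auto)
    have R: "cN q 6 N = nf q (N + n) (6 * N + 20 * binom2 N - 40 * (1 * n + 3 * binom2 n))"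
      by (rule cN_val[OF q]) (use N 1 in auto)
    show ?thesis unfolding L R jt_1 nf_mq nf_mult[OF q]
      apply (rule nf_eq)
      subgoal using N 1 by presburger
      subgoal using binom2_2[of "(N + 1 - m) + (N + m)"] binom2_2[of "2*n"] binom2_2[of m] binom2_2[of N] binom2_2[of n] N 1 by algebra
      done
  next
    case 2
    have L: "f2 q (N + 1 - m) (N + m) = nf q ((N + 1 - m) + (N + m) + (2*n+1)) (binom2 ((N + 1 - m) + (N + m)) + (N + 1 - m)^2 + (N + m)^2 - (1 * (2*n+1) + 3 * binom2 (2*n+1)))"
      by (rule f2_val[OF q]) (use N 2 in auto)
    have R: "cN q 6 N = nf q (N + n) (6 * N + 20 * binom2 N - 40 * (2 * n + 3 * binom2 n))"
      by (rule cN_val[OF q]) (use N 2 in auto)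
    show ?thesis unfolding L R jt_1 nf_mq nf_mult[OF q]
      apply (rule nf_eq)
      subgoal using N 2 by presburger
      subgoal using binom2_2[of "(N + 1 - m) + (N + m)"] binom2_2[of "2*n+1"] binom2_2[of m] binom2_2[of N] binom2_2[of n] N 2 by algebra
      done
  next
    case 3
    have "f2 q (N + 1 - m) (N + m) = 0" unfolding f2_def
      by (subst Evn_zero[where t="2*n+2"]) (use N 3 in auto)
    moreover have "cN q 6 N = 0" unfolding cN_def
      by (subst Evn_zero[where t="n+1"]) (use N 3 in auto)
    ultimately show ?thesis by simp
  qed
qed

lemma jt_abs:
  assumes "norm p < 1" "z \<noteq> 0"
  shows "(\<lambda>l. norm (jt z p l)) summable_on UNIV"
proof -
  have "((\<lambda>l. norm (jt z p l)) has_sum ((\<Sum>k. norm (jt z p (int k))) + (\<Sum>k. norm (jt z p (- int k - 1))))) UNIV"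
    by (rule int_has_sum_split) (use jt_summable[OF assms] in simp_all)
  thus ?thesis by (rule has_sum_imp_summable)
qed

lemma jt_neg: "q \<noteq> 0 \<Longrightarrow> jt (- (q powi e)) (q^k) m = nf q m (e*m + int k * binom2 m)"
proof -
  assume q: "q \<noteq> 0"
  have a: "(- (q powi e)) powi m = (-1) powi m * q powi (e * m)"
    using power_int_mult_distrib[of "-1" "q powi e" m] by (simp add: power_int_mult)
  show ?thesis unfolding jt_def a nf_def using q by (simp add: power_int_power power_int_add mult_ac)
qed

lemma Eterm_nf: "Eterm (q^k) c l = nf q l (int k * (3 * binom2 l + c * l))"
  unfolding Eterm_def nf_def by (simp add: power_int_power)

lemma pow_norm_lt1: "norm (q::complex) < 1 \<Longrightarrow> n > 0 \<Longrightarrow> norm (q^n) < 1"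
  by (simp add: norm_power power_less_one_iff)

lemma C_has_sum:
  assumes q: "q \<noteq> 0" "norm q < 1"
  shows "(cN q e has_sum (qpoch_inf (q^20) (q^20) * qtheta (q powi e) (q^20) * qtheta (q powi (20 - 2*e)) (q^40))) UNIV"
    and "(\<lambda>N. norm (cN q e N)) summable_on UNIV"
proof -
  define p2 where "p2 = q^20"
  define p3 where "p3 = q^40"
  have p2: "norm p2 < 1" "p2 \<noteq> 0" unfolding p2_def using q pow_norm_lt1[of q 20] by auto
  have p3: "norm p3 < 1" "p3 \<noteq> 0" unfolding p3_def using q pow_norm_lt1[of q 40] by auto
  define z2 where "z2 = - (q powi e)"
  define z3 where "z3 = - (q powi (20 - 2*e))"
  have z2: "z2 \<noteq> 0" and z3: "z3 \<noteq> 0" unfolding z2_def z3_def using q by auto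
  define X2 where "X2 = qpoch_inf p2 p2 * qtheta (q powi e) p2"
  define Q3 where "Q3 = qpoch_inf p3 p3"
  define T3 where "T3 = qtheta (q powi (20 - 2*e)) p3"
  have Q3: "Q3 \<noteq> 0" unfolding Q3_def by (rule qpoch_nz[OF p3(1)])
  have H2: "(jt z2 p2 has_sum X2) UNIV"
  proof -
    have "- p2 / z2 = p2 / (q powi e)" unfolding z2_def by simp
    thus ?thesis using jtp[OF p2 z2] unfolding X2_def qtheta_def z2_def by (simp add: mult_ac)
  qed
  have H3: "(jt z3 p3 has_sum (Q3 * T3)) UNIV"
  proof -
    have "- p3 / z3 = p3 / (q powi (20 - 2*e))" unfolding z3_def by simp
    thus ?thesis using jtp[OF p3 z3] unfolding Q3_def T3_def qtheta_def z3_def by (simp add: mult_ac)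
  qed
  define F where "F = (\<lambda>(m,k). jt z2 p2 m * jt z3 p3 k)"
  have HF: "(F has_sum (X2 * (Q3 * T3))) (UNIV \<times> UNIV)"
    unfolding F_def by (rule has_sum_product_family[OF H2 jt_abs[OF p2(1) z2] H3 jt_abs[OF p3(1) z3]])
  have AF: "(\<lambda>x. norm (F x)) summable_on (UNIV \<times> UNIV)"
    unfolding F_def by (rule abs_summable_product_family[OF jt_abs[OF p2(1) z2] jt_abs[OF p3(1) z3]])
  define G where "G = (\<lambda>(N,k). nf q N (e * N + 20 * binom2 N) * Eterm p3 (N + 1) k)"
  have FG: "F (N + 2*k, k) = G (N, k)" for N k
  proof -
    have "F (N + 2*k, k) = nf q (N + 2*k) (e * (N + 2*k) + 20 * binom2 (N + 2*k)) * nf q k ((20 - 2*e) * k + 40 * binom2 k)"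
      unfolding F_def z2_def z3_def p2_def p3_def using q by (simp add: jt_neg)
    also have "\<dots> = nf q (N + 2*k + k) (e * (N + 2*k) + 20 * binom2 (N + 2*k) + ((20 - 2*e) * k + 40 * binom2 k))"
      by (rule nf_mult[OF q(1)])
    also have "\<dots> = nf q (N + k) (e * N + 20 * binom2 N + 40 * (3 * binom2 k + (N + 1) * k))"
      apply (rule nf_eq)
      subgoal by presburger
      subgoal using binom2_2[of "N + 2*k"] binom2_2[of N] binom2_2[of k] by algebra
      done
    also have "\<dots> = G (N, k)"
      unfolding G_def p3_def Eterm_nf nf_mult[OF q(1), symmetric] by simp
    finally show ?thesis .
  qed
  have HG: "(G has_sum (X2 * (Q3 * T3))) UNIV"
  proof -
    have "(G has_sum (X2 * (Q3 * T3))) UNIV = (F has_sum (X2 * (Q3 * T3))) UNIV"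
      by (rule has_sum_reindex_bij_witness[where i="\<lambda>(m,k). (m - 2*k, k)" and j="\<lambda>(N,k). (N + 2*k, k)"])
         (auto simp: FG)
    thus ?thesis using HF by simp
  qed
  have AG: "(\<lambda>x. norm (G x)) summable_on UNIV"
  proof -
    have "((\<lambda>x. norm (G x)) summable_on UNIV) = ((\<lambda>x. norm (F x)) summable_on UNIV)"
      by (rule summable_on_reindex_bij_witness[where i="\<lambda>(m,k). (m - 2*k, k)" and j="\<lambda>(N,k). (N + 2*k, k)"])
         (auto simp: FG)
    thus ?thesis using AF by simp
  qed
  have inner: "((\<lambda>k. G (N, k)) has_sum (nf q N (e * N + 20 * binom2 N) * Ev p3 (N + 1))) UNIV" for N
    unfolding G_def using has_sum_cmult_right[OF E_val[OF p3, of "N + 1"]] by simp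
  have outer: "((\<lambda>N. nf q N (e * N + 20 * binom2 N) * Ev p3 (N + 1)) has_sum (X2 * (Q3 * T3))) UNIV"
    using has_sum_SigmaD[where A=UNIV and B="\<lambda>_. UNIV", OF _ inner] HG by simp
  have cNe: "nf q N (e * N + 20 * binom2 N) * Ev p3 (N + 1) = Q3 * cN q e N" for N
    unfolding cN_def Ev_Evn Q3_def p3_def by (simp add: mult_ac)
  have "((\<lambda>N. inverse Q3 * (Q3 * cN q e N)) has_sum (inverse Q3 * (X2 * (Q3 * T3)))) UNIV"
    using has_sum_cmult_right[OF outer, of "inverse Q3"] unfolding cNe .
  thus "(cN q e has_sum (qpoch_inf (q^20) (q^20) * qtheta (q powi e) (q^20) * qtheta (q powi (20 - 2*e)) (q^40))) UNIV"
    using Q3 unfolding X2_def T3_def p2_def p3_def by (simp add: field_simps)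
  have "(\<lambda>N. norm (nf q N (e * N + 20 * binom2 N) * Ev p3 (N + 1))) summable_on UNIV"
  proof (rule Infinite_Sum.abs_summable_on_comparison_test')
    have "(\<lambda>N. norm (infsum (\<lambda>k. norm (G (N, k))) UNIV)) summable_on UNIV"
      using AG Infinite_Sum.abs_summable_on_Sigma_iff[where f=G and A=UNIV and B="\<lambda>_. UNIV"] by simp
    thus "(\<lambda>N. infsum (\<lambda>k. norm (G (N, k))) UNIV) summable_on UNIV"
      by (simp add: infsum_nonneg)
    fix N
    have sN: "(\<lambda>k. norm (G (N, k))) summable_on UNIV"
      using AG Infinite_Sum.abs_summable_on_Sigma_iff[where f=G and A=UNIV and B="\<lambda>_. UNIV"] by simp
    show "norm (nf q N (e * N + 20 * binom2 N) * Ev p3 (N + 1)) \<le> infsum (\<lambda>k. norm (G (N, k))) UNIV"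
      by (rule norm_infsum_le[OF inner has_sum_infsum[OF sN]]) simp
  qed
  hence "(\<lambda>N. norm (inverse Q3) * norm (nf q N (e * N + 20 * binom2 N) * Ev p3 (N + 1))) summable_on UNIV"
    by (rule summable_on_cmult_right)
  moreover have "norm (inverse Q3) * norm (nf q N (e * N + 20 * binom2 N) * Ev p3 (N + 1)) = norm (cN q e N)" for N
    unfolding cNe using Q3 by (simp add: norm_mult norm_inverse)
  ultimately show "(\<lambda>N. norm (cN q e N)) summable_on UNIV" by simp
qed

lemma int_abs_le_sq: "\<bar>i\<bar> \<le> (i::int)^2"
proof (cases "i = 0")
  case False
  hence "1 \<le> \<bar>i\<bar>" by simp
  hence "\<bar>i\<bar> * 1 \<le> \<bar>i\<bar> * \<bar>i\<bar>" by (intro mult_left_mono) auto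
  thus ?thesis by (simp add: power2_eq_square abs_mult_self_eq)
qed simp

lemma geo_int_abs:
  assumes q: "norm (q::complex) < 1"
  shows "(\<lambda>i::int. norm (complex_of_real (norm q ^ nat \<bar>i\<bar>))) summable_on UNIV"
proof -
  have s1: "summable (\<lambda>k. norm (norm (complex_of_real (norm q ^ nat \<bar>int k\<bar>))))"
    using q by (simp add: summable_geometric norm_power)
  have s2: "summable (\<lambda>k::nat. norm (norm (complex_of_real (norm q ^ nat \<bar>- int k - 1\<bar>))))"
  proof -
    have "nat \<bar>- int k - 1\<bar> = Suc k" for k by simp
    thus ?thesis using q by (simp add: summable_geometric summable_mult norm_power norm_mult)
  qed
  show ?thesis using int_has_sum_split[OF s1 s2] by (rule has_sum_imp_summable)
qed

definition f3 :: "complex \<Rightarrow> int \<times> int \<times> int \<Rightarrow> complex" where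
  "f3 q = (\<lambda>(i, j, k). (-1) powi (i + j + k) * q powi (binom2 (i + j + k) + i^2 + j^2 + k^2))"

lemma f3_abs:
  assumes q: "0 < norm q" "norm q < 1"
  shows "(\<lambda>x. norm (f3 q x)) summable_on UNIV"
proof -
  define g where "g = (\<lambda>i::int. complex_of_real (norm q ^ nat \<bar>i\<bar>))"
  have g: "(\<lambda>i. norm (g i)) summable_on UNIV" unfolding g_def by (rule geo_int_abs[OF q(2)])
  have g2: "(\<lambda>y. norm ((\<lambda>(j,k). g j * g k) y)) summable_on (UNIV \<times> UNIV)"
    by (rule abs_summable_product_family[OF g g])
  have g3: "(\<lambda>z. norm ((\<lambda>(i,y). g i * (\<lambda>(j,k). g j * g k) y) z)) summable_on (UNIV \<times> (UNIV \<times> UNIV))"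
    by (rule abs_summable_product_family[OF g g2])
  show ?thesis
  proof (rule Infinite_Sum.abs_summable_on_comparison_test)
    show "(\<lambda>z. norm ((\<lambda>(i,y). g i * (\<lambda>(j,k). g j * g k) y) z)) summable_on UNIV"
      using g3 by simp
    fix x :: "int \<times> int \<times> int"
    obtain i j k where x: "x = (i, j, k)" by (cases x) auto
    define E where "E = binom2 (i + j + k) + i^2 + j^2 + k^2"
    define A where "A = \<bar>i\<bar> + \<bar>j\<bar> + \<bar>k\<bar>"
    have AE: "A \<le> E" unfolding A_def E_def
      using binom2_nonneg[of "i+j+k"] int_abs_le_sq[of i] int_abs_le_sq[of j] int_abs_le_sq[of k] by linarith
    have "norm (f3 q x) = norm q powi E"
      unfolding x f3_def E_def by (simp add: norm_mult norm_power_int)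
    also have "\<dots> \<le> norm q powi A"
      by (rule power_int_decreasing[OF AE]) (use q in auto)
    also have "norm q powi A = norm q ^ (nat \<bar>i\<bar> + nat \<bar>j\<bar> + nat \<bar>k\<bar>)"
    proof -
      have "A = int (nat \<bar>i\<bar> + nat \<bar>j\<bar> + nat \<bar>k\<bar>)" unfolding A_def by simp
      thus ?thesis by (metis power_int_of_nat)
    qed
    also have "\<dots> = norm ((\<lambda>(i,y). g i * (\<lambda>(j,k). g j * g k) y) x)"
      unfolding x g_def by (simp add: norm_mult power_add norm_power mult_ac)
    finally show "norm (f3 q x) \<le> norm ((\<lambda>(i,y). g i * (\<lambda>(j,k). g j * g k) y) x)" by simp
  qed
qed

lemma f3_split:
  assumes q: "q \<noteq> 0"
  shows "f3 q (i, j, k) = pre q i j * Eterm q (i + j + 1) k"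
proof -
  have "pre q i j * Eterm q (i + j + 1) k = nf q (i + j + k) (binom2 (i + j) + i^2 + j^2 + (3 * binom2 k + (i + j + 1) * k))"
    unfolding pre_def Eterm_def nf_def[of q k, symmetric] nf_mult[OF q] ..
  also have "\<dots> = nf q (i + j + k) (binom2 (i + j + k) + i^2 + j^2 + k^2)"
    apply (rule nf_eq)
    subgoal by simp
    subgoal using binom2_2[of "i + j"] binom2_2[of "i + j + k"] binom2_2[of k] by algebra
    done
  finally show ?thesis unfolding f3_def nf_def by simp
qed

lemma lhs_has_sum:
  assumes q: "0 < norm q" "norm q < 1"
  shows "((\<lambda>(i,j). f2 q i j) has_sum (infsum (f3 q) UNIV / qpoch q)) UNIV"
proof -
  have q0: "q \<noteq> 0" using q by auto
  define S3 where "S3 = infsum (f3 q) UNIV"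
  have H3: "(f3 q has_sum S3) UNIV"
    unfolding S3_def by (rule has_sum_infsum[OF abs_summable_summable[OF f3_abs[OF q]]])
  define h where "h = (\<lambda>((i,j),k). f3 q (i, j, k))"
  have Hh: "(h has_sum S3) (UNIV \<times> UNIV)"
  proof -
    have "(h has_sum S3) UNIV = (f3 q has_sum S3) UNIV"
      by (rule has_sum_reindex_bij_witness[where i="\<lambda>(i,j,k). ((i,j),k)" and j="\<lambda>((i,j),k). (i,j,k)"])
         (auto simp: h_def)
    thus ?thesis using H3 by simp
  qed
  have inner: "((\<lambda>k. h (x, k)) has_sum (case x of (i,j) \<Rightarrow> pre q i j * Ev q (i + j + 1))) UNIV" for x
  proof -
    obtain i j where x: "x = (i,j)" by (cases x) auto
    show ?thesis unfolding x h_def using has_sum_cmult_right[OF E_val[OF q(2) q0, of "i + j + 1"], of "pre q i j"]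
      by (simp add: f3_split[OF q0])
  qed
  have outer: "((\<lambda>(i,j). pre q i j * Ev q (i + j + 1)) has_sum S3) UNIV"
    using has_sum_SigmaD[where A=UNIV and B="\<lambda>_. UNIV", OF _ inner] Hh by simp
  define P where "P = qpoch q"
  have P: "P \<noteq> 0" unfolding P_def qpoch_def by (rule qpoch_nz[OF q(2)])
  have e: "(\<lambda>(i,j). pre q i j * Ev q (i + j + 1)) = (\<lambda>x. P * (\<lambda>(i,j). f2 q i j) x)"
    by (auto simp: f2_def Ev_Evn P_def qpoch_def mult_ac)
  have "((\<lambda>x. inverse P * (P * (\<lambda>(i,j). f2 q i j) x)) has_sum (inverse P * S3)) UNIV"
    using has_sum_cmult_right[OF outer[unfolded e], of "inverse P"] .
  thus ?thesis using P unfolding S3_def P_def by (simp add: field_simps)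
qed

lemma theta4_0:
  assumes q: "q \<noteq> 0" "norm q < 1"
  shows "(jt (q^2) (q^4) has_sum (qpoch_inf (q^4) (q^4) * qtheta (- (q^2)) (q^4))) UNIV"
proof -
  have p: "norm (q^4) < 1" "q^4 \<noteq> 0" using q pow_norm_lt1[of q 4] by auto
  have "- (q^4) / q^2 = q^4 / (- (q^2))" by simp
  thus ?thesis using jtp[OF p, of "q^2"] q unfolding qtheta_def by (simp add: mult_ac)
qed

lemma theta4_1:
  assumes q: "q \<noteq> 0" "norm q < 1"
  shows "(jt 1 (q^4) has_sum (qpoch_inf (q^4) (q^4) * qtheta (- 1) (q^4))) UNIV"
proof -
  have p: "norm (q^4) < 1" "q^4 \<noteq> 0" using q pow_norm_lt1[of q 4] by auto
  show ?thesis using jtp[OF p, of 1] q unfolding qtheta_def by (simp add: mult_ac)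
qed

lemma main_identity:
  assumes q: "0 < norm q" "norm q < 1"
  shows "infsum (f3 q) UNIV / qpoch q =
     (qpoch_inf (q^4) (q^4) * qtheta (- (q^2)) (q^4)) * (qpoch_inf (q^20) (q^20) * qtheta (q^4) (q^20) * qtheta (q^12) (q^40))
     + (- q) * ((qpoch_inf (q^4) (q^4) * qtheta (- 1) (q^4)) * (qpoch_inf (q^20) (q^20) * qtheta (q^6) (q^20) * qtheta (q^8) (q^40)))"
proof -
  have q0: "q \<noteq> 0" using q by auto
  define W0 where "W0 = qpoch_inf (q^4) (q^4) * qtheta (- (q^2)) (q^4)"
  define W1 where "W1 = qpoch_inf (q^4) (q^4) * qtheta (- 1) (q^4)"
  define Y0 where "Y0 = qpoch_inf (q^20) (q^20) * qtheta (q^4) (q^20) * qtheta (q^12) (q^40)"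
  define Y1 where "Y1 = qpoch_inf (q^20) (q^20) * qtheta (q^6) (q^20) * qtheta (q^8) (q^40)"
  have p4: "norm (q^4) < 1" using pow_norm_lt1[of q 4] q by auto
  have C4: "(cN q 4 has_sum Y0) UNIV" "(\<lambda>N. norm (cN q 4 N)) summable_on UNIV"
    using C_has_sum[OF q0 q(2), of 4] unfolding Y0_def by simp_all
  have C6: "(cN q 6 has_sum Y1) UNIV" "(\<lambda>N. norm (cN q 6 N)) summable_on UNIV"
    using C_has_sum[OF q0 q(2), of 6] unfolding Y1_def by simp_all
  have P0: "((\<lambda>(m,N). jt (q^2) (q^4) m * cN q 4 N) has_sum (W0 * Y0)) (UNIV \<times> UNIV)"
    unfolding W0_def
    by (rule has_sum_product_family[OF theta4_0[OF q0 q(2)] jt_abs[OF p4] C4]) (use q0 in simp)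
  have P1': "((\<lambda>(m,N). jt 1 (q^4) m * cN q 6 N) has_sum (W1 * Y1)) (UNIV \<times> UNIV)"
    unfolding W1_def
    by (rule has_sum_product_family[OF theta4_1[OF q0 q(2)] jt_abs[OF p4] C6]) simp
  have P1: "((\<lambda>x. (- q) * (\<lambda>(m,N). jt 1 (q^4) m * cN q 6 N) x) has_sum ((- q) * (W1 * Y1))) (UNIV \<times> UNIV)"
    by (rule has_sum_cmult_right[OF P1'])
  define D0 where "D0 = {x :: int \<times> int. even (fst x + snd x)}"
  define D1 where "D1 = {x :: int \<times> int. odd (fst x + snd x)}"
  have H0: "((\<lambda>(i,j). f2 q i j) has_sum (W0 * Y0)) D0"
  proof -
    have "((\<lambda>(m,N). jt (q^2) (q^4) m * cN q 4 N) has_sum (W0 * Y0)) (UNIV \<times> UNIV)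
        = ((\<lambda>(i,j). f2 q i j) has_sum (W0 * Y0)) D0"
      by (rule has_sum_reindex_bij_witness[where j="\<lambda>(m,N). (- N - m, m - N)" and i="\<lambda>(i,j). ((j - i) div 2, - (i + j) div 2)"])
         (auto simp: D0_def f2_D0[OF q0], presburger+)
    thus ?thesis using P0 by simp
  qed
  have H1: "((\<lambda>(i,j). f2 q i j) has_sum ((- q) * (W1 * Y1))) D1"
  proof -
    have "((\<lambda>x. (- q) * (\<lambda>(m,N). jt 1 (q^4) m * cN q 6 N) x) has_sum ((- q) * (W1 * Y1))) (UNIV \<times> UNIV)
        = ((\<lambda>(i,j). f2 q i j) has_sum ((- q) * (W1 * Y1))) D1"
      by (rule has_sum_reindex_bij_witness[where j="\<lambda>(m,N). (N + 1 - m, N + m)" and i="\<lambda>(i,j). ((j - i + 1) div 2, (i + j - 1) div 2)"])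
         (auto simp: D1_def f2_D1[OF q0], presburger+)
    thus ?thesis using P1 by simp
  qed
  have D: "D0 \<inter> D1 = {}" and U: "D0 \<union> D1 = UNIV" unfolding D0_def D1_def by auto
  have "((\<lambda>(i,j). f2 q i j) has_sum (W0 * Y0 + (- q) * (W1 * Y1))) UNIV"
    using has_sum_Un_disjoint[OF H0 H1 D] unfolding U .
  moreover have "((\<lambda>(i,j). f2 q i j) has_sum (infsum (f3 q) UNIV / qpoch q)) UNIV"
    by (rule lhs_has_sum[OF q])
  ultimately have "infsum (f3 q) UNIV / qpoch q = W0 * Y0 + (- q) * (W1 * Y1)"
    using has_sum_unique by blast
  thus ?thesis unfolding W0_def W1_def Y0_def Y1_def .
qed

theorem mainTheorem17:
  fixes q :: complex
  assumes "0 < norm q" and "norm q < 1"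
  shows "(1 / qpoch q ^ 3) *
      (\<Sum>\<^sub>\<infinity>(i, j, k) \<in> (UNIV :: (int \<times> int \<times> int) set).
         (-1) powi (i + j + k) * q powi (binom2 (i + j + k) + i^2 + j^2 + k^2))
    = qpoch_inf (q^4) (q^4) * qpoch_inf (q^20) (q^20) / qpoch q ^ 2 *
      (\<Sum>a\<in>{0..(1::nat)}. (-q) ^ a * qtheta (- (q ^ (2 - 2*a))) (q^4)
          * qtheta (q ^ (4 + 2*a)) (q^20) * qtheta (q ^ (12 - 4*a)) (q^40))"
proof -
  define P where "P = qpoch q"
  have P: "P \<noteq> 0" unfolding P_def qpoch_def by (rule qpoch_nz[OF assms(2)])
  have e3: "(\<Sum>\<^sub>\<infinity>(i, j, k) \<in> (UNIV :: (int \<times> int \<times> int) set).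
         (-1) powi (i + j + k) * q powi (binom2 (i + j + k) + i^2 + j^2 + k^2)) = infsum (f3 q) UNIV"
    unfolding f3_def ..
  have es: "(\<Sum>a\<in>{0..(1::nat)}. (-q) ^ a * qtheta (- (q ^ (2 - 2*a))) (q^4)
          * qtheta (q ^ (4 + 2*a)) (q^20) * qtheta (q ^ (12 - 4*a)) (q^40))
      = qtheta (- (q^2)) (q^4) * qtheta (q^4) (q^20) * qtheta (q^12) (q^40)
        + (- q) * qtheta (- 1) (q^4) * qtheta (q^6) (q^20) * qtheta (q^8) (q^40)"
    by (simp add: atLeast0_atMost_Suc)
  have M: "infsum (f3 q) UNIV = P * ((qpoch_inf (q^4) (q^4) * qtheta (- (q^2)) (q^4)) * (qpoch_inf (q^20) (q^20) * qtheta (q^4) (q^20) * qtheta (q^12) (q^40))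
     + (- q) * ((qpoch_inf (q^4) (q^4) * qtheta (- 1) (q^4)) * (qpoch_inf (q^20) (q^20) * qtheta (q^6) (q^20) * qtheta (q^8) (q^40))))"
    using main_identity[OF assms] P unfolding P_def by (simp add: field_simps)
  show ?thesis unfolding e3 es M P_def[symmetric] using P
    by (simp add: field_simps power3_eq_cube power2_eq_square)
qed

end
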